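(* Let $\mathcal{C}$ be an ordinary smooth projective curve of genus $g\ge1$ over $\mathbb{F}_q$. Then all of its Frobenius angles $\vartheta_1,\ldots,\vartheta_g$ are irrational.
   Context: Let $\mathcal{C}$ be a smooth projective curve of genus $g\ge1$ over the finite field $\mathbb{F}_q$ ($q$ a power of the prime $p$). The numerator of its zeta function is $P(T)=\prod_{j=1}^{2g}(1-\tau_j T)\in\mathbb{Z}[T]$, where the Frobenius eigenvalues $\tau_j$ satisfy $|\tau_j|=q^{1/2}$ and $\tau_{j+g}=\overline{\tau_j}$ for $j=1,\ldots,g$. Write $\tau_j = q^{1/2}e^{\pi i \vartheta_j}$ and $\tau_{j+g}=q^{1/2}e^{-\pi i\vartheta_j}$ with $\vartheta_j\in[0,1]$; these $\vartheta_j$ ($j=1,\ldots,g$) are the Frobenius angles. Fixing an embedding $\overline{\mathbb{Q}}\hookrightarrow\overline{\mathbb{Q}}_p$, the curve is ordinary if at least half of $\tau_1,\ldots,\tau_{2g}$ are $p$-adic units. *)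

theory Defs
  imports "HOL-Analysis.Analysis" "HOL-Computational_Algebra.Polynomial"
begin

text \<open>A p-adic valuation on the algebraic numbers (viewed inside the complex numbers)
  extending the p-adic valuation of the rationals. Such valuations correspond exactly
  to the choice of an embedding of the algebraic closure of Q into the algebraic
  closure of Q_p; an algebraic number x is a p-adic unit iff v x = 0.\<close>
definition padic_valuation_ext :: "nat \<Rightarrow> (complex \<Rightarrow> real) \<Rightarrow> bool" where
  "padic_valuation_ext p v \<longleftrightarrow>
     (\<forall>x y. algebraic x \<and> algebraic y \<and> x \<noteq> 0 \<and> y \<noteq> 0 \<longrightarrow> v (x * y) = v x + v y) \<and>
     (\<forall>x y. algebraic x \<and> algebraic y \<and> x \<noteq> 0 \<and> y \<noteq> 0 \<and> x + y \<noteq> 0 \<longrightarrow>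
            v (x + y) \<ge> min (v x) (v y)) \<and>
     v (of_nat p) = 1 \<and>
     (\<forall>n::int. n \<noteq> 0 \<and> \<not> int p dvd n \<longrightarrow> v (of_int n) = 0)"

definition padic_unit :: "(complex \<Rightarrow> real) \<Rightarrow> complex \<Rightarrow> bool" where
  "padic_unit v x \<longleftrightarrow> x \<noteq> 0 \<and> v x = 0"

end

theory Submission
  imports Defs
begin

lemma alg_pow_int:
  fixes y :: complex
  assumes "n > 0" "y ^ n = of_int c"
  shows "algebraic y"
proof (rule algebraicI[of "monom 1 n - [:of_int c:]"])
  show "coeff (monom 1 n - [:of_int c:]) i \<in> \<int>" for i
    by (cases i) (auto simp: coeff_monom)
  show "monom 1 n - [:of_int c:] \<noteq> (0::complex poly)"
  proof
    assume "monom 1 n - [:of_int c:] = (0::complex poly)"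
    then have "coeff (monom 1 n - [:of_int c:]) n = (0::complex)" by simp
    then show False using assms(1) by (cases n) (auto simp: coeff_monom)
  qed
  show "poly (monom 1 n - [:of_int c:]) y = 0"
    using assms by (simp add: poly_monom)
qed

lemma pv_mult_all:
  assumes "padic_valuation_ext p v"
  shows "\<forall>x y. algebraic x \<and> algebraic y \<and> x \<noteq> 0 \<and> y \<noteq> 0 \<longrightarrow> v (x * y) = v x + v y"
  using assms unfolding padic_valuation_ext_def by (rule conjunct1)

lemma pv_mult:
  assumes "padic_valuation_ext p v" "algebraic x" "algebraic y" "x \<noteq> 0" "y \<noteq> 0"
  shows "v (x * y) = v x + v y"
  using pv_mult_all[OF assms(1)] assms(2-5) by blast

lemma pv_p:
  assumes "padic_valuation_ext p v"
  shows "v (of_nat p) = 1"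
  using assms unfolding padic_valuation_ext_def by (rule conjunct2[THEN conjunct2, THEN conjunct1])

lemma pv_int_all:
  assumes "padic_valuation_ext p v"
  shows "\<forall>n::int. n \<noteq> 0 \<and> \<not> int p dvd n \<longrightarrow> v (of_int n) = 0"
  using assms unfolding padic_valuation_ext_def by (rule conjunct2[THEN conjunct2, THEN conjunct2])

lemma v_one:
  assumes "padic_valuation_ext p v" "prime p"
  shows "v 1 = 0"
proof -
  have "\<not> int p dvd 1"
  proof
    assume "int p dvd 1"
    then have "p dvd 1" by (metis int_dvd_int_iff of_nat_1)
    then show False using assms(2) by simp
  qed
  then have "v (of_int 1) = 0" using pv_int_all[OF assms(1), rule_format, of 1] by simp
  then show ?thesis by simp
qed

lemma v_pow:
  assumes "padic_valuation_ext p v" "prime p" "x \<noteq> 0" "\<And>m. algebraic (x ^ m)"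
  shows "v (x ^ n) = real n * v x"
proof (induction n)
  case 0 then show ?case using v_one[OF assms(1,2)] by simp
next
  case (Suc n)
  have "v (x * x ^ n) = v x + v (x ^ n)"
    using pv_mult[OF assms(1) assms(4)[of 1] assms(4)[of n]] assms(3) by simp
  then show ?case using Suc by (simp add: algebra_simps)
qed

lemma v_p_pow:
  assumes "padic_valuation_ext p v" "prime p"
  shows "v (of_nat p ^ n) = real n"
proof -
  have "v (of_nat p) = 1" using pv_p[OF assms(1)] .
  moreover have "algebraic ((of_nat p :: complex) ^ m)" for m
    by (rule rat_imp_algebraic) simp
  moreover have "(of_nat p :: complex) \<noteq> 0" using assms(2) prime_gt_0_nat by simp
  ultimately show ?thesis using v_pow[OF assms, of "of_nat p"] by simp
qed

lemma count_aux:
  fixes Q :: "nat \<Rightarrow> bool" and g j0 :: nat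
  assumes j0: "j0 \<in> {1..g}" and nu1: "\<not> Q j0" and nu2: "\<not> Q (j0 + g)"
    and notboth: "\<And>j. j \<in> {1..g} \<Longrightarrow> \<not> (Q j \<and> Q (j + g))"
  shows "card {j \<in> {1..2*g}. Q j} \<le> g - 1"
proof -
  define U where "U = {j \<in> {1..2*g}. Q j}"
  define f where "f = (\<lambda>j::nat. if j \<le> g then j else j - g)"
  have inj: "inj_on f U"
  proof (rule inj_onI)
    fix x y assume xy: "x \<in> U" "y \<in> U" "f x = f y"
    have x: "1 \<le> x" "x \<le> 2*g" "Q x" and y: "1 \<le> y" "y \<le> 2*g" "Q y" using xy(1,2) unfolding U_def by auto
    show "x = y"
    proof (cases "x \<le> g")
      case True
      show ?thesis
      proof (cases "y \<le> g")
        case True with \<open>x \<le> g\<close> xy(3) show ?thesis unfolding f_def by simp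
      next
        case False
        with \<open>x \<le> g\<close> xy(3) have "y = x + g" unfolding f_def by simp
        with notboth[of x] x y \<open>x \<le> g\<close> show ?thesis by simp
      qed
    next
      case False
      show ?thesis
      proof (cases "y \<le> g")
        case True
        with False xy(3) have "x = y + g" unfolding f_def by simp
        with notboth[of y] x y \<open>y \<le> g\<close> show ?thesis by simp
      next
        case False with \<open>\<not> x \<le> g\<close> xy(3) show ?thesis unfolding f_def by simp
      qed
    qed
  qed
  have img: "f ` U \<subseteq> {1..g} - {j0}"
  proof
    fix y assume "y \<in> f ` U"
    then obtain x where x: "x \<in> U" "y = f x" by blast
    have x': "1 \<le> x" "x \<le> 2*g" "Q x" using x(1) unfolding U_def by auto
    show "y \<in> {1..g} - {j0}"
    proof (cases "x \<le> g")
      case True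
      then have "y = x" using x(2) unfolding f_def by simp
      moreover have "x \<noteq> j0" using nu1 x' by auto
      ultimately show ?thesis using True x' by simp
    next
      case False
      then have "y = x - g" using x(2) unfolding f_def by simp
      moreover have "x = (x - g) + g" using False by simp
      moreover have "x - g \<noteq> j0" using nu2 x' \<open>x = (x - g) + g\<close> by metis
      ultimately show ?thesis using False x' by auto
    qed
  qed
  have "card U = card (f ` U)" using card_image[OF inj] by simp
  also have "\<dots> \<le> card ({1..g} - {j0})" by (rule card_mono[OF _ img]) simp
  also have "\<dots> = g - 1" using j0 by simp
  finally show ?thesis unfolding U_def .
qed

theorem lemma8:
  fixes p k g :: nat and P :: "int poly" and tau :: "nat \<Rightarrow> complex"
    and theta :: "nat \<Rightarrow> real" and v :: "complex \<Rightarrow> real"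
  assumes "prime p" and "k \<ge> 1" and "g \<ge> 1"
    and "map_poly of_int P = (\<Prod>j\<in>{1..2*g}. [:1, - tau j:])"
    and "\<And>j. j \<in> {1..g} \<Longrightarrow> theta j \<in> {0..1}"
    and "\<And>j. j \<in> {1..g} \<Longrightarrow>
           tau j = complex_of_real (sqrt (real (p ^ k))) * exp (\<i> * complex_of_real (pi * theta j))"
    and "\<And>j. j \<in> {1..g} \<Longrightarrow>
           tau (j + g) = complex_of_real (sqrt (real (p ^ k))) * exp (- \<i> * complex_of_real (pi * theta j))"
    and "padic_valuation_ext p v"
    and "card {j \<in> {1..2*g}. padic_unit v (tau j)} \<ge> g"
  shows "\<forall>j\<in>{1..g}. theta j \<notin> \<rat>"
proof (rule ccontr)
  assume "\<not> (\<forall>j\<in>{1..g}. theta j \<notin> \<rat>)"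
  then obtain j0 where j0: "j0 \<in> {1..g}" "theta j0 \<in> \<rat>" by blast
  define s where "s = complex_of_real (sqrt (real (p ^ k)))"
  have p0: "p > 0" using assms(1) prime_gt_0_nat by blast
  have s0: "s \<noteq> 0" unfolding s_def using p0 by simp
  have ss: "s * s = of_nat (p ^ k)"
  proof -
    have "sqrt (real (p ^ k)) * sqrt (real (p ^ k)) = real (p ^ k)" by simp
    then have "complex_of_real (sqrt (real (p ^ k)) * sqrt (real (p ^ k))) = complex_of_real (real (p ^ k))" by simp
    then show ?thesis unfolding s_def of_real_mult by simp
  qed
  have tau1: "tau j = s * exp (\<i> * complex_of_real (pi * theta j))" if "j \<in> {1..g}" for j
    using assms(6)[OF that] s_def by simp
  have tau2: "tau (j + g) = s * exp (- \<i> * complex_of_real (pi * theta j))" if "j \<in> {1..g}" for j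
    using assms(7)[OF that] s_def by simp
  have nz: "tau j \<noteq> 0" if "j \<in> {1..2*g}" for j
  proof (cases "j \<le> g")
    case True then show ?thesis using that tau1[of j] s0 by simp
  next
    case False
    then have "j - g \<in> {1..g}" "j = (j - g) + g" using that by auto
    then show ?thesis using tau2[of "j - g"] s0 by simp
  qed
  have Pnz: "map_poly (of_int :: int \<Rightarrow> complex) P \<noteq> 0"
  proof
    assume "map_poly (of_int :: int \<Rightarrow> complex) P = 0"
    then have "poly (map_poly (of_int :: int \<Rightarrow> complex) P) 0 = 0" by simp
    then show False unfolding assms(4) by (simp add: poly_prod)
  qed
  have alg: "algebraic (tau j)" if "j \<in> {1..2*g}" for j
  proof -
    have "poly (map_poly (of_int :: int \<Rightarrow> complex) P) (inverse (tau j)) = 0"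
      unfolding assms(4) poly_prod
      by (rule prod_zero) (use that nz[OF that] in \<open>auto intro!: bexI[of _ j]\<close>)
    then have "algebraic (inverse (tau j))"
      by (intro algebraicI[OF _ Pnz]) (auto simp: coeff_map_poly)
    then have "algebraic (inverse (inverse (tau j)))" by blast
    then show ?thesis by simp
  qed
  have prod_pair: "tau j * tau (j + g) = of_nat (p ^ k)" if "j \<in> {1..g}" for j
  proof -
    have "tau j * tau (j + g) = (s * s) * (exp (\<i> * complex_of_real (pi * theta j)) * exp (- \<i> * complex_of_real (pi * theta j)))"
      using tau1[OF that] tau2[OF that] by (simp add: algebra_simps)
    also have "\<dots> = s * s" by (simp add: exp_add[symmetric])
    finally show ?thesis using ss by simp
  qed
  have vq: "v (of_nat (p ^ k)) = real k"
    using v_p_pow[OF assms(8,1), of k] by simp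
  have notboth: "\<not> (padic_unit v (tau j) \<and> padic_unit v (tau (j + g)))" if "j \<in> {1..g}" for j
  proof
    assume u: "padic_unit v (tau j) \<and> padic_unit v (tau (j + g))"
    have a1: "algebraic (tau j)" "algebraic (tau (j+g))" using alg that by auto
    have "v (tau j * tau (j + g)) = v (tau j) + v (tau (j + g))"
      using pv_mult[OF assms(8) a1] u unfolding padic_unit_def by blast
    then have "real k = 0" using u prod_pair[OF that] vq unfolding padic_unit_def by simp
    then show False using assms(2) by simp
  qed
  obtain a b where ab: "b > 0" "theta j0 = of_int a / of_int b" using j0(2) Rats_cases' by blast
  define N where "N = nat (2 * b)"
  have N0: "N > 0" using ab(1) N_def by simp
  have sN: "s ^ N = of_nat (p ^ k) ^ nat b"
  proof -
    have "N = 2 * nat b" unfolding N_def using ab(1) by simp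
    then have "s ^ N = (s * s) ^ nat b" by (simp add: power_mult power2_eq_square)
    then show ?thesis using ss by simp
  qed
  have eN: "exp (c * complex_of_real (pi * theta j0)) ^ N = 1" if "c = \<i> \<or> c = - \<i>" for c
  proof -
    have "exp (c * complex_of_real (pi * theta j0)) ^ N = exp (of_nat N * (c * complex_of_real (pi * theta j0)))"
      by (simp add: exp_of_nat_mult)
    also have "of_nat N * (c * complex_of_real (pi * theta j0)) = (2 * of_int (if c = \<i> then a else - a) * pi) * \<i>"
      using that ab(1) unfolding N_def ab(2) by (auto simp: field_simps)
    also have "exp \<dots> = 1" by (rule exp_integer_2pi) simp
    finally show ?thesis .
  qed
  have nonunit: "\<not> padic_unit v x" if xN: "x ^ N = of_nat (p ^ k) ^ nat b" and xnz: "x \<noteq> 0" for x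
  proof
    assume u: "padic_unit v x"
    have am: "algebraic (x ^ m)" for m
    proof (rule alg_pow_int[OF N0])
      show "(x ^ m) ^ N = of_int ((int (p ^ k) ^ nat b) ^ m)"
      proof -
        have "(x ^ m) ^ N = (x ^ N) ^ m" by (simp only: power_mult[symmetric] mult.commute)
        then show ?thesis using xN by simp
      qed
    qed
    have "v (x ^ N) = real N * v x" by (rule v_pow[OF assms(8,1) xnz am])
    also have "\<dots> = 0" using u unfolding padic_unit_def by simp
    finally have "v (of_nat p ^ (k * nat b)) = 0" using xN by (simp add: power_mult)
    then have "real (k * nat b) = 0" using v_p_pow[OF assms(8,1)] by simp
    then show False using assms(2) ab(1) by simp
  qed
  have nu1: "\<not> padic_unit v (tau j0)"
  proof (rule nonunit)
    show "tau j0 ^ N = of_nat (p ^ k) ^ nat b"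
      using tau1[OF j0(1)] sN eN[of "\<i>"] by (simp add: power_mult_distrib)
    show "tau j0 \<noteq> 0" using nz j0(1) by auto
  qed
  have nu2: "\<not> padic_unit v (tau (j0 + g))"
  proof (rule nonunit)
    show "tau (j0 + g) ^ N = of_nat (p ^ k) ^ nat b"
      using tau2[OF j0(1)] sN eN[of "- \<i>"] by (simp add: power_mult_distrib)
    show "tau (j0 + g) \<noteq> 0" using nz j0(1) by auto
  qed
  have "card {j \<in> {1..2*g}. padic_unit v (tau j)} \<le> g - 1"
    by (rule count_aux[of j0 g "\<lambda>j. padic_unit v (tau j)", OF j0(1) nu1 nu2 notboth])
  then show False using assms(9) assms(3) by simp
qed

end
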